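(* Let $M$ be a magma satisfying $(xy)z = xx$, $x(yz) = xx$ and $xy = yx$ for all $x,y,z\in M$. Then $M$ satisfies $xy = zu$ for all $x,y,z,u\in M$ if and only if $M$ avoids the magma $Q$ on $\{0,1,2,3\}$ with Cayley table \[ \begin{array}{c|cccc} Q & 0 & 1 & 2 & 3 \\ \hline 0 & 0 & 0 & 0 & 0 \\ 1 & 0 & 0 & 3 & 0 \\ 2 & 0 & 3 & 0 & 0 \\ 3 & 0 & 0 & 0 & 0 \end{array}. \]
   Context: A magma is a nonempty set with a binary operation, written by juxtaposition. A magma $M$ avoids a magma $F$ if no submagma of $M$ is isomorphic to $F$. *)

theory Defs
  imports Main
begin

text \<open>A magma is modelled as a type 'a (nonempty) with a binary operation on all of it.
  A finite magma given by a table is a carrier set A together with an operation on A.\<close>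

definition submagma :: "('a \<Rightarrow> 'a \<Rightarrow> 'a) \<Rightarrow> 'a set \<Rightarrow> bool" where
  "submagma mult S \<longleftrightarrow> S \<noteq> {} \<and> (\<forall>x\<in>S. \<forall>y\<in>S. mult x y \<in> S)"

definition magma_iso :: "'b set \<Rightarrow> ('b \<Rightarrow> 'b \<Rightarrow> 'b) \<Rightarrow> 'a set \<Rightarrow> ('a \<Rightarrow> 'a \<Rightarrow> 'a) \<Rightarrow> bool" where
  "magma_iso A opA S opS \<longleftrightarrow>
     (\<exists>f. bij_betw f A S \<and> (\<forall>x\<in>A. \<forall>y\<in>A. f (opA x y) = opS (f x) (f y)))"

definition avoids :: "('a \<Rightarrow> 'a \<Rightarrow> 'a) \<Rightarrow> 'b set \<Rightarrow> ('b \<Rightarrow> 'b \<Rightarrow> 'b) \<Rightarrow> bool" where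
  "avoids mult A opA \<longleftrightarrow> \<not> (\<exists>S. submagma mult S \<and> magma_iso A opA S mult)"

definition Q_carrier :: "nat set" where
  "Q_carrier = {0, 1, 2, 3}"

definition Q_op :: "nat \<Rightarrow> nat \<Rightarrow> nat" where
  "Q_op x y = (if (x = 1 \<and> y = 2) \<or> (x = 2 \<and> y = 1) then 3 else 0)"

end

theory Submission
  imports Defs
begin

theorem mainTheorem4:
  fixes mult :: "'a \<Rightarrow> 'a \<Rightarrow> 'a"
  assumes "\<forall>x y z. mult (mult x y) z = mult x x"
    and "\<forall>x y z. mult x (mult y z) = mult x x"
    and "\<forall>x y. mult x y = mult y x"
  shows "(\<forall>x y z u. mult x y = mult z u) \<longleftrightarrow> avoids mult Q_carrier Q_op"
proof
  assume C: "\<forall>x y z u. mult x y = mult z u"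
  show "avoids mult Q_carrier Q_op"
    unfolding avoids_def magma_iso_def
  proof clarify
    fix S f
    assume b: "bij_betw f Q_carrier S"
      and h: "\<forall>x\<in>Q_carrier. \<forall>y\<in>Q_carrier. f (Q_op x y) = mult (f x) (f y)"
    have "f 3 = mult (f 1) (f 2)" using h[rule_format, of 1 2] by (simp add: Q_carrier_def Q_op_def)
    also have "\<dots> = mult (f 0) (f 0)" using C by blast
    also have "\<dots> = f 0" using h[rule_format, of 0 0] by (simp add: Q_carrier_def Q_op_def)
    finally have "f 3 = f 0" .
    moreover have "inj_on f Q_carrier" using b by (simp add: bij_betw_def)
    ultimately show False by (auto simp: Q_carrier_def inj_on_def)
  qed
next
  assume A: "avoids mult Q_carrier Q_op"
  have a1: "\<And>x y z. mult (mult x y) z = mult x x" using assms(1) by blast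
  have a2: "\<And>x y z. mult x (mult y z) = mult x x" using assms(2) by blast
  have a3: "\<And>x y. mult x y = mult y x" using assms(3) by blast
  have sq: "\<And>x z. mult x x = mult z z" by (metis a1 a3)
  define e where "e = mult (SOME x. True) (SOME x. True)"
  have sqo: "\<And>x. mult x x = e" unfolding e_def using sq by blast
  show "\<forall>x y z u. mult x y = mult z u"
  proof (rule ccontr)
    assume "\<not> (\<forall>x y z u. mult x y = mult z u)"
    then obtain a b where ab: "mult a b \<noteq> e" by (metis sqo)
    define c where "c = mult a b"
    have e1: "\<And>x. mult e x = e" by (metis a1 sqo)
    have o2: "\<And>x. mult x e = e" by (metis a3 e1)
    have ac: "mult a c = e" unfolding c_def by (metis a2 sqo)
    have bc: "mult b c = e" unfolding c_def by (metis a2 a3 sqo)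
    have ca: "mult c a = e" using ac a3 by metis
    have cb: "mult c b = e" using bc a3 by metis
    have ba: "mult b a = c" unfolding c_def using a3 by metis
    have cc: "mult c c = e" by (rule sqo)
    have aa: "mult a a = e" by (rule sqo)
    have bb: "mult b b = e" by (rule sqo)
    have co: "c \<noteq> e" using ab c_def by simp
    have ao: "a \<noteq> e" using ab e1 by metis
    have bo: "b \<noteq> e" using ab o2 by metis
    have abd: "a \<noteq> b" using ab sqo by metis
    have cad: "c \<noteq> a" using cb co c_def by auto
    have cbd: "c \<noteq> b" using ac co c_def by auto
    define f where "f = (\<lambda>n::nat. if n = 0 then e else if n = 1 then a else if n = 2 then b else c)"
    define S where "S = {e, a, b, c}"
    have im: "f ` Q_carrier = S" unfolding f_def S_def Q_carrier_def by auto
    have inj: "inj_on f Q_carrier" unfolding f_def Q_carrier_def inj_on_def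
      using co ao bo abd cad cbd by auto
    have hom: "\<forall>x\<in>Q_carrier. \<forall>y\<in>Q_carrier. f (Q_op x y) = mult (f x) (f y)"
      unfolding f_def Q_carrier_def Q_op_def
      using e1 o2 ac bc ca cb ba cc aa bb c_def by auto
    have sub: "submagma mult S" unfolding submagma_def S_def
      using e1 o2 ac bc ca cb ba cc aa bb c_def by auto
    have "magma_iso Q_carrier Q_op S mult" unfolding magma_iso_def
      using inj im hom by (auto simp: bij_betw_def)
    with sub A show False unfolding avoids_def by blast
  qed
qed

end
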